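(* Let $G$ and $H$ be non-archimedean topological groups and suppose $H$ is a $G$-group. Then the topological semidirect product $H\rtimes G$ is non-archimedean.
   Context: A topological group is non-archimedean if it has a local base at the identity consisting of open subgroups. $H$ is a $G$-group if there is a continuous action $G\times H\to H$ such that each translation $h\mapsto gh$ is a group automorphism of $H$. $H\rtimes G$ is $H\times G$ with the product topology and multiplication $(h_1,g_1)(h_2,g_2)=(h_1\cdot g_1h_2,\ g_1g_2)$. *)

theory Defs
  imports "HOL-Analysis.Analysis" "HOL-Algebra.Group"
begin

definition topological_group :: "('a, 'b) monoid_scheme \<Rightarrow> 'a topology \<Rightarrow> bool" where
  "topological_group G T \<longleftrightarrow>
     group G \<and> topspace T = carrier G \<and>
     continuous_map (prod_topology T T) T (\<lambda>(x, y). x \<otimes>\<^bsub>G\<^esub> y) \<and>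
     continuous_map T T (\<lambda>x. inv\<^bsub>G\<^esub> x)"

definition non_archimedean :: "('a, 'b) monoid_scheme \<Rightarrow> 'a topology \<Rightarrow> bool" where
  "non_archimedean G T \<longleftrightarrow>
     topological_group G T \<and>
     (\<forall>U. openin T U \<and> \<one>\<^bsub>G\<^esub> \<in> U \<longrightarrow>
          (\<exists>V. subgroup V G \<and> openin T V \<and> V \<subseteq> U))"

definition G_group ::
  "('g, 'c) monoid_scheme \<Rightarrow> 'g topology \<Rightarrow> ('h, 'd) monoid_scheme \<Rightarrow> 'h topology
     \<Rightarrow> ('g \<Rightarrow> 'h \<Rightarrow> 'h) \<Rightarrow> bool" where
  "G_group G TG H TH act \<longleftrightarrow>
     (\<forall>h\<in>carrier H. act \<one>\<^bsub>G\<^esub> h = h) \<and>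
     (\<forall>g1\<in>carrier G. \<forall>g2\<in>carrier G. \<forall>h\<in>carrier H.
        act (g1 \<otimes>\<^bsub>G\<^esub> g2) h = act g1 (act g2 h)) \<and>
     continuous_map (prod_topology TG TH) TH (\<lambda>(g, h). act g h) \<and>
     (\<forall>g\<in>carrier G. act g \<in> iso H H)"

definition semidirect_product ::
  "('h, 'd) monoid_scheme \<Rightarrow> ('g, 'c) monoid_scheme \<Rightarrow> ('g \<Rightarrow> 'h \<Rightarrow> 'h)
     \<Rightarrow> ('h \<times> 'g) monoid" where
  "semidirect_product H G act =
     \<lparr>carrier = carrier H \<times> carrier G,
      mult = (\<lambda>(h1, g1) (h2, g2). (h1 \<otimes>\<^bsub>H\<^esub> act g1 h2, g1 \<otimes>\<^bsub>G\<^esub> g2)),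
      one = (\<one>\<^bsub>H\<^esub>, \<one>\<^bsub>G\<^esub>)\<rparr>"

end

theory Submission
  imports Defs
begin

lemma iso_props:
  assumes gH: "group H" and f: "f \<in> iso H H"
  shows "\<And>x. x \<in> carrier H \<Longrightarrow> f x \<in> carrier H"
    and "\<And>x y. x \<in> carrier H \<Longrightarrow> y \<in> carrier H \<Longrightarrow> f (x \<otimes>\<^bsub>H\<^esub> y) = f x \<otimes>\<^bsub>H\<^esub> f y"
    and "f \<one>\<^bsub>H\<^esub> = \<one>\<^bsub>H\<^esub>"
    and "\<And>x. x \<in> carrier H \<Longrightarrow> f (inv\<^bsub>H\<^esub> x) = inv\<^bsub>H\<^esub> (f x)"
proof -
  have hom: "f \<in> hom H H" using f by (simp add: iso_def)
  then have gh: "group_hom H H f" using gH by (simp add: group_hom_def group_hom_axioms_def)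
  show "\<And>x. x \<in> carrier H \<Longrightarrow> f x \<in> carrier H" using hom by (auto simp: hom_def)
  show "\<And>x y. x \<in> carrier H \<Longrightarrow> y \<in> carrier H \<Longrightarrow> f (x \<otimes>\<^bsub>H\<^esub> y) = f x \<otimes>\<^bsub>H\<^esub> f y"
    using hom by (auto simp: hom_def)
  show "f \<one>\<^bsub>H\<^esub> = \<one>\<^bsub>H\<^esub>" using group_hom.hom_one[OF gh] .
  show "\<And>x. x \<in> carrier H \<Longrightarrow> f (inv\<^bsub>H\<^esub> x) = inv\<^bsub>H\<^esub> (f x)" using group_hom.hom_inv[OF gh] .
qed

theorem corollary3p4:
  fixes G :: "('g, 'c) monoid_scheme" and TG :: "'g topology"
    and H :: "('h, 'd) monoid_scheme" and TH :: "'h topology"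
    and act :: "'g \<Rightarrow> 'h \<Rightarrow> 'h"
  assumes "non_archimedean G TG"
    and "non_archimedean H TH"
    and "G_group G TG H TH act"
  shows "non_archimedean (semidirect_product H G act) (prod_topology TH TG)"
proof -
  define S where "S = semidirect_product H G act"
  have gG: "group G" and tsG: "topspace TG = carrier G"
    and mG: "continuous_map (prod_topology TG TG) TG (\<lambda>(x, y). x \<otimes>\<^bsub>G\<^esub> y)"
    and iG: "continuous_map TG TG (\<lambda>x. inv\<^bsub>G\<^esub> x)"
    and naG: "\<And>U. openin TG U \<Longrightarrow> \<one>\<^bsub>G\<^esub> \<in> U \<Longrightarrow> \<exists>V. subgroup V G \<and> openin TG V \<and> V \<subseteq> U"
    using assms(1) by (auto simp: non_archimedean_def topological_group_def)
  have gH: "group H" and tsH: "topspace TH = carrier H"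
    and mH: "continuous_map (prod_topology TH TH) TH (\<lambda>(x, y). x \<otimes>\<^bsub>H\<^esub> y)"
    and iH: "continuous_map TH TH (\<lambda>x. inv\<^bsub>H\<^esub> x)"
    and naH: "\<And>U. openin TH U \<Longrightarrow> \<one>\<^bsub>H\<^esub> \<in> U \<Longrightarrow> \<exists>V. subgroup V H \<and> openin TH V \<and> V \<subseteq> U"
    using assms(2) by (auto simp: non_archimedean_def topological_group_def)
  have a1: "\<And>h. h \<in> carrier H \<Longrightarrow> act \<one>\<^bsub>G\<^esub> h = h"
    and a2: "\<And>g1 g2 h. g1 \<in> carrier G \<Longrightarrow> g2 \<in> carrier G \<Longrightarrow> h \<in> carrier H \<Longrightarrow>
        act (g1 \<otimes>\<^bsub>G\<^esub> g2) h = act g1 (act g2 h)"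
    and aC: "continuous_map (prod_topology TG TH) TH (\<lambda>(g, h). act g h)"
    and aI: "\<And>g. g \<in> carrier G \<Longrightarrow> act g \<in> iso H H"
    using assms(3) unfolding G_group_def by auto
  note ac = iso_props(1)[OF gH aI]
  note am = iso_props(2)[OF gH aI]
  note a_one = iso_props(3)[OF gH aI]
  note ainv = iso_props(4)[OF gH aI]
  interpret G: group G by (rule gG)
  interpret H: group H by (rule gH)
  have carS: "carrier S = carrier H \<times> carrier G" and oneS: "\<one>\<^bsub>S\<^esub> = (\<one>\<^bsub>H\<^esub>, \<one>\<^bsub>G\<^esub>)"
    and multS: "\<And>h1 g1 h2 g2. (h1, g1) \<otimes>\<^bsub>S\<^esub> (h2, g2) = (h1 \<otimes>\<^bsub>H\<^esub> act g1 h2, g1 \<otimes>\<^bsub>G\<^esub> g2)"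
    by (simp_all add: S_def semidirect_product_def)
  have multS': "\<And>p q. p \<otimes>\<^bsub>S\<^esub> q = (fst p \<otimes>\<^bsub>H\<^esub> act (snd p) (fst q), snd p \<otimes>\<^bsub>G\<^esub> snd q)"
    by (metis multS prod.collapse)
  have gS: "group S"
  proof (rule groupI)
    fix x y assume "x \<in> carrier S" "y \<in> carrier S"
    then show "x \<otimes>\<^bsub>S\<^esub> y \<in> carrier S" by (auto simp: carS multS' ac)
  next
    show "\<one>\<^bsub>S\<^esub> \<in> carrier S" by (simp add: carS oneS)
  next
    fix x y z assume "x \<in> carrier S" "y \<in> carrier S" "z \<in> carrier S"
    then show "x \<otimes>\<^bsub>S\<^esub> y \<otimes>\<^bsub>S\<^esub> z = x \<otimes>\<^bsub>S\<^esub> (y \<otimes>\<^bsub>S\<^esub> z)"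
      by (auto simp: carS multS' ac am a2 H.m_assoc G.m_assoc)
  next
    fix x assume "x \<in> carrier S"
    then show "\<one>\<^bsub>S\<^esub> \<otimes>\<^bsub>S\<^esub> x = x" by (auto simp: carS multS' oneS a1)
  next
    fix x assume x: "x \<in> carrier S"
    show "\<exists>y\<in>carrier S. y \<otimes>\<^bsub>S\<^esub> x = \<one>\<^bsub>S\<^esub>"
    proof (intro bexI)
      show "(act (inv\<^bsub>G\<^esub> snd x) (inv\<^bsub>H\<^esub> fst x), inv\<^bsub>G\<^esub> snd x) \<in> carrier S"
        using x by (auto simp: carS ac)
      show "(act (inv\<^bsub>G\<^esub> snd x) (inv\<^bsub>H\<^esub> fst x), inv\<^bsub>G\<^esub> snd x) \<otimes>\<^bsub>S\<^esub> x = \<one>\<^bsub>S\<^esub>"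
        using x by (auto simp: carS multS' oneS am[symmetric] a_one)
    qed
  qed
  interpret S: group S by (rule gS)
  have invS: "\<And>x. x \<in> carrier S \<Longrightarrow> inv\<^bsub>S\<^esub> x = (act (inv\<^bsub>G\<^esub> snd x) (inv\<^bsub>H\<^esub> fst x), inv\<^bsub>G\<^esub> snd x)"
  proof -
    fix x assume x: "x \<in> carrier S"
    show "inv\<^bsub>S\<^esub> x = (act (inv\<^bsub>G\<^esub> snd x) (inv\<^bsub>H\<^esub> fst x), inv\<^bsub>G\<^esub> snd x)"
      by (rule S.inv_equality) (use x in \<open>auto simp: carS multS' oneS am[symmetric] a_one ac\<close>)
  qed
  have ts: "topspace (prod_topology TH TG) = carrier S" by (simp add: carS tsH tsG)
  have aC': "continuous_map Z TH (\<lambda>x. act (f x) (k x))"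
    if "continuous_map Z TG f" "continuous_map Z TH k" for Z :: "'z topology" and f k
    using continuous_map_compose[OF continuous_map_pairedI[OF that] aC] by (simp add: o_def)
  have mH': "continuous_map Z TH (\<lambda>x. f x \<otimes>\<^bsub>H\<^esub> k x)"
    if "continuous_map Z TH f" "continuous_map Z TH k" for Z :: "'z topology" and f k
    using continuous_map_compose[OF continuous_map_pairedI[OF that] mH] by (simp add: o_def)
  have mG': "continuous_map Z TG (\<lambda>x. f x \<otimes>\<^bsub>G\<^esub> k x)"
    if "continuous_map Z TG f" "continuous_map Z TG k" for Z :: "'z topology" and f k
    using continuous_map_compose[OF continuous_map_pairedI[OF that] mG] by (simp add: o_def)
  have iH': "continuous_map Z TH (\<lambda>x. inv\<^bsub>H\<^esub> f x)" if "continuous_map Z TH f" for Z :: "'z topology" and f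
    using continuous_map_compose[OF that iH] by (simp add: o_def)
  have iG': "continuous_map Z TG (\<lambda>x. inv\<^bsub>G\<^esub> f x)" if "continuous_map Z TG f" for Z :: "'z topology" and f
    using continuous_map_compose[OF that iG] by (simp add: o_def)
  have fst1: "continuous_map (prod_topology X Y) X (\<lambda>x. fst x)" for X :: "'x topology" and Y :: "'y topology"
    by (rule continuous_map_fst)
  have snd1: "continuous_map (prod_topology X Y) Y (\<lambda>x. snd x)" for X :: "'x topology" and Y :: "'y topology"
    by (rule continuous_map_snd)
  have fst2: "continuous_map Z X (\<lambda>x. fst (f x))" if "continuous_map Z (prod_topology X Y) f"
    for Z :: "'z topology" and X :: "'x topology" and Y :: "'y topology" and f
    using continuous_map_fst_of[OF that] by (simp add: o_def)
  have snd2: "continuous_map Z Y (\<lambda>x. snd (f x))" if "continuous_map Z (prod_topology X Y) f"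
    for Z :: "'z topology" and X :: "'x topology" and Y :: "'y topology" and f
    using continuous_map_snd_of[OF that] by (simp add: o_def)
  let ?P = "prod_topology TH TG"
  have contM: "continuous_map (prod_topology ?P ?P) ?P (\<lambda>(x, y). x \<otimes>\<^bsub>S\<^esub> y)"
  proof -
    have "continuous_map (prod_topology ?P ?P) ?P
       (\<lambda>p. (fst (fst p) \<otimes>\<^bsub>H\<^esub> act (snd (fst p)) (fst (snd p)), snd (fst p) \<otimes>\<^bsub>G\<^esub> snd (snd p)))"
    proof -
      have c1: "continuous_map (prod_topology ?P ?P) TH (\<lambda>p. fst (fst p))" by (rule fst2[OF fst1])
      have c2: "continuous_map (prod_topology ?P ?P) TG (\<lambda>p. snd (fst p))" by (rule snd2[OF fst1])
      have c3: "continuous_map (prod_topology ?P ?P) TH (\<lambda>p. fst (snd p))" by (rule fst2[OF snd1])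
      have c4: "continuous_map (prod_topology ?P ?P) TG (\<lambda>p. snd (snd p))" by (rule snd2[OF snd1])
      show ?thesis by (intro continuous_map_pairedI mH' mG' aC' c1 c2 c3 c4)
    qed
    then show ?thesis by (simp add: multS' split_def)
  qed
  have contI: "continuous_map ?P ?P (\<lambda>x. inv\<^bsub>S\<^esub> x)"
  proof (rule continuous_map_eq)
    show "continuous_map ?P ?P (\<lambda>x. (act (inv\<^bsub>G\<^esub> snd x) (inv\<^bsub>H\<^esub> fst x), inv\<^bsub>G\<^esub> snd x))"
      by (intro continuous_map_pairedI aC' iH' iG' fst1 snd1)
    show "\<And>x. x \<in> topspace ?P \<Longrightarrow>
      (act (inv\<^bsub>G\<^esub> snd x) (inv\<^bsub>H\<^esub> fst x), inv\<^bsub>G\<^esub> snd x) = inv\<^bsub>S\<^esub> x"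
      using invS ts by auto
  qed
  have TGS: "topological_group S ?P" unfolding topological_group_def
    using gS ts contM contI by auto
  have "non_archimedean S ?P"
    unfolding non_archimedean_def
  proof (intro conjI TGS allI impI, elim conjE)
    fix U assume U: "openin ?P U" and oneU: "\<one>\<^bsub>S\<^esub> \<in> U"
    have "(\<one>\<^bsub>H\<^esub>, \<one>\<^bsub>G\<^esub>) \<in> U" using oneU oneS by simp
    then have "\<exists>V1 W1. openin TH V1 \<and> openin TG W1 \<and> \<one>\<^bsub>H\<^esub> \<in> V1 \<and> \<one>\<^bsub>G\<^esub> \<in> W1 \<and> V1 \<times> W1 \<subseteq> U"
      using U[unfolded openin_prod_topology_alt] by simp
    then obtain V1 W1 where V1: "openin TH V1" and W1: "openin TG W1" and oV1: "\<one>\<^bsub>H\<^esub> \<in> V1"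
      and oW1: "\<one>\<^bsub>G\<^esub> \<in> W1" and VW1: "V1 \<times> W1 \<subseteq> U"
      by blast
    obtain V0 where sV0: "subgroup V0 H" and oV0: "openin TH V0" and V01: "V0 \<subseteq> V1"
      using naH[OF V1 oV1] by blast
    obtain W0 where sW0: "subgroup W0 G" and oW0: "openin TG W0" and W01: "W0 \<subseteq> W1"
      using naG[OF W1 oW1] by blast
    have V0c: "V0 \<subseteq> carrier H" using sV0 by (rule subgroup.subset)
    define C where "C = {x \<in> topspace (prod_topology TG TH). (\<lambda>(g, h). act g h) x \<in> V0}"
    have oC: "openin (prod_topology TG TH) C"
      unfolding C_def by (rule openin_continuous_map_preimage[OF aC oV0])
    have "(\<one>\<^bsub>G\<^esub>, \<one>\<^bsub>H\<^esub>) \<in> C"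
      using a1[of "\<one>\<^bsub>H\<^esub>"] subgroup.one_closed[OF sV0] tsG tsH unfolding C_def by auto
    then have "\<exists>P Q. openin TG P \<and> openin TH Q \<and> \<one>\<^bsub>G\<^esub> \<in> P \<and> \<one>\<^bsub>H\<^esub> \<in> Q \<and> P \<times> Q \<subseteq> C"
      using oC[unfolded openin_prod_topology_alt] by simp
    then obtain P Q where P: "openin TG P" and Q: "openin TH Q" and oP: "\<one>\<^bsub>G\<^esub> \<in> P"
      and oQ: "\<one>\<^bsub>H\<^esub> \<in> Q" and PQ: "P \<times> Q \<subseteq> C"
      by blast
    obtain W where sW: "subgroup W G" and oW: "openin TG W" and WPW0: "W \<subseteq> P \<inter> W0"
      using naG[OF openin_Int[OF P oW0]] oP subgroup.one_closed[OF sW0] by blast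
    obtain V' where sV': "subgroup V' H" and oV': "openin TH V'" and V'Q: "V' \<subseteq> Q"
      using naH[OF Q oQ] by blast
    have Wc: "W \<subseteq> carrier G" using sW by (rule subgroup.subset)
    have V'c: "V' \<subseteq> carrier H" using sV' by (rule subgroup.subset)
    have key: "\<And>w v. w \<in> W \<Longrightarrow> v \<in> V' \<Longrightarrow> act w v \<in> V0"
    proof -
      fix w v assume "w \<in> W" "v \<in> V'"
      then have "(w, v) \<in> P \<times> Q" using WPW0 V'Q by auto
      then have "(w, v) \<in> C" using PQ by blast
      then show "act w v \<in> V0" unfolding C_def by simp
    qed
    define K where "K = {h \<in> V0. \<forall>w\<in>W. act w h \<in> V0}"
    have Kc: "K \<subseteq> carrier H" using V0c by (auto simp: K_def)
    have Kinv: "\<And>h w. h \<in> K \<Longrightarrow> w \<in> W \<Longrightarrow> act w h \<in> K"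
    proof -
      fix h w assume h: "h \<in> K" and w: "w \<in> W"
      have "act w' (act w h) \<in> V0" if w': "w' \<in> W" for w'
      proof -
        have "act (w' \<otimes>\<^bsub>G\<^esub> w) h \<in> V0" using h w w' subgroup.m_closed[OF sW] by (auto simp: K_def)
        moreover have "act (w' \<otimes>\<^bsub>G\<^esub> w) h = act w' (act w h)"
          using w w' h Wc Kc by (intro a2) auto
        ultimately show ?thesis by simp
      qed
      then show "act w h \<in> K" using h w by (auto simp: K_def)
    qed
    have subK: "subgroup K H"
    proof (rule H.subgroupI)
      show "K \<subseteq> carrier H" by (rule Kc)
      have "\<one>\<^bsub>H\<^esub> \<in> K" using subgroup.one_closed[OF sV0] a_one Wc by (auto simp: K_def)
      then show "K \<noteq> {}" by blast
    next
      fix a assume a: "a \<in> K"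
      then have ac0: "a \<in> carrier H" using Kc by auto
      show "inv\<^bsub>H\<^esub> a \<in> K"
        using a ac0 Wc subgroup.m_inv_closed[OF sV0] ainv by (auto simp: K_def)
    next
      fix a b assume a: "a \<in> K" and b: "b \<in> K"
      then have "a \<in> carrier H" "b \<in> carrier H" using Kc by auto
      then show "a \<otimes>\<^bsub>H\<^esub> b \<in> K"
        using a b Wc subgroup.m_closed[OF sV0] am by (auto simp: K_def)
    qed
    have V'K: "V' \<subseteq> K"
    proof
      fix v assume v: "v \<in> V'"
      have "v = act \<one>\<^bsub>G\<^esub> v" using a1 v V'c by auto
      also have "\<dots> \<in> V0" using key v subgroup.one_closed[OF sW] by auto
      finally show "v \<in> K" using key v by (auto simp: K_def)
    qed
    have idc: "continuous_map TH TH (\<lambda>x. x)" using continuous_map_id[unfolded id_def] .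
    have oK: "openin TH K"
    proof -
      have eq: "K = (\<Union>k\<in>K. {x \<in> topspace TH. (\<lambda>x. inv\<^bsub>H\<^esub> k \<otimes>\<^bsub>H\<^esub> x) x \<in> V'})"
      proof
        show "K \<subseteq> (\<Union>k\<in>K. {x \<in> topspace TH. (\<lambda>x. inv\<^bsub>H\<^esub> k \<otimes>\<^bsub>H\<^esub> x) x \<in> V'})"
        proof
          fix k assume k: "k \<in> K"
          then have "k \<in> carrier H" using Kc by auto
          then have "k \<in> {x \<in> topspace TH. (\<lambda>x. inv\<^bsub>H\<^esub> k \<otimes>\<^bsub>H\<^esub> x) x \<in> V'}"
            using subgroup.one_closed[OF sV'] tsH by auto
          then show "k \<in> (\<Union>k\<in>K. {x \<in> topspace TH. (\<lambda>x. inv\<^bsub>H\<^esub> k \<otimes>\<^bsub>H\<^esub> x) x \<in> V'})"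
            using k by blast
        qed
      next
        show "(\<Union>k\<in>K. {x \<in> topspace TH. (\<lambda>x. inv\<^bsub>H\<^esub> k \<otimes>\<^bsub>H\<^esub> x) x \<in> V'}) \<subseteq> K"
        proof (clarify)
          fix k x assume k: "k \<in> K" and x: "x \<in> topspace TH" and kx: "inv\<^bsub>H\<^esub> k \<otimes>\<^bsub>H\<^esub> x \<in> V'"
          have kc: "k \<in> carrier H" using k Kc by auto
          have xc: "x \<in> carrier H" using x tsH by auto
          have "x = k \<otimes>\<^bsub>H\<^esub> (inv\<^bsub>H\<^esub> k \<otimes>\<^bsub>H\<^esub> x)" using kc xc by (simp add: H.m_assoc[symmetric])
          also have "\<dots> \<in> K" using k kx V'K subgroup.m_closed[OF subK] by auto
          finally show "x \<in> K" .
        qed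
      qed
      have "openin TH (\<Union>k\<in>K. {x \<in> topspace TH. (\<lambda>x. inv\<^bsub>H\<^esub> k \<otimes>\<^bsub>H\<^esub> x) x \<in> V'})"
      proof (rule openin_Union, clarify)
        fix k assume k: "k \<in> K"
        then have "inv\<^bsub>H\<^esub> k \<in> topspace TH" using Kc tsH by auto
        then have "continuous_map TH TH (\<lambda>x. inv\<^bsub>H\<^esub> k \<otimes>\<^bsub>H\<^esub> x)"
          by (intro mH' idc) simp
        then show "openin TH {x \<in> topspace TH. (\<lambda>x. inv\<^bsub>H\<^esub> k \<otimes>\<^bsub>H\<^esub> x) x \<in> V'}"
          by (rule openin_continuous_map_preimage[OF _ oV'])
      qed
      then show ?thesis using eq by simp
    qed
    show "\<exists>V. subgroup V S \<and> openin ?P V \<and> V \<subseteq> U"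
    proof (intro exI conjI)
      show "subgroup (K \<times> W) S"
      proof (rule S.subgroupI)
        show "K \<times> W \<subseteq> carrier S" using Kc Wc by (auto simp: carS)
        show "K \<times> W \<noteq> {}" using subgroup.one_closed[OF subK] subgroup.one_closed[OF sW] by blast
      next
        fix a assume a: "a \<in> K \<times> W"
        then have "a \<in> carrier S" using Kc Wc by (auto simp: carS)
        then show "inv\<^bsub>S\<^esub> a \<in> K \<times> W"
          using a invS Kinv subgroup.m_inv_closed[OF subK] subgroup.m_inv_closed[OF sW] by auto
      next
        fix a b assume a: "a \<in> K \<times> W" and b: "b \<in> K \<times> W"
        then show "a \<otimes>\<^bsub>S\<^esub> b \<in> K \<times> W"
          using Kinv subgroup.m_closed[OF subK] subgroup.m_closed[OF sW] by (auto simp: multS')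
      qed
      show "openin ?P (K \<times> W)" using oK oW by (simp add: openin_prod_Times_iff)
      have "K \<times> W \<subseteq> V1 \<times> W1" using V01 W01 WPW0 by (auto simp: K_def)
      then show "K \<times> W \<subseteq> U" using VW1 by blast
    qed
  qed
  then show ?thesis by (simp add: S_def)
qed

end
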